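(* Let $\mathcal{X}\subset\mathbb{R}^d$ be finite, $x_1,x_2\in\mathcal{X}$, $\rho=|x_1-x_2|$, $c=(x_1+x_2)/2$. If the edge $e=\{x_1,x_2\}$ is critical in the Vietoris–Rips filtration generated by $\mathcal{X}$, then no point of $\mathcal{X}$ lies in the ball $B_{(1-\sqrt3/2)\rho}(c)$.
   Context: The Vietoris–Rips complex is $\mathcal{R}_r(\mathcal{X})=\{\mathcal{I}\subseteq\mathcal{X}:|y-z|\le r\ \forall y,z\in\mathcal{I}\}$ and $B_r(c)$ is the closed Euclidean ball. The edge $e$ enters the filtration at radius $\rho$; it is critical if its insertion (together with the cliques containing it) changes reduced homology, which is the case precisely when the link $\mathrm{lk}(e)$ of $e$ in $\mathcal{R}_\rho(\mathcal{X})$ is empty or has some nonzero reduced Betti number $\beta_{k-2}(\mathrm{lk}(e))$, $k\ge2$. Here the link of a simplex $\sigma$ in a complex $K$ is $\{\tau\in\mathrm{st}_K(\sigma):\tau\cap\sigma=\emptyset\}$, with $\mathrm{st}_K(\sigma)$ the smallest subcomplex containing all simplices containing $\sigma$. *)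

theory Defs
  imports "HOL-Analysis.Analysis"
begin

text \<open>Abstract simplicial complexes are represented as sets of (finite) vertex sets,
  closed under subsets; the empty simplex is included and plays the role of the
  (-1)-simplex, which yields the augmented (reduced) chain complex.\<close>

definition vietoris_rips :: "real \<Rightarrow> 'a::metric_space set \<Rightarrow> 'a set set" where
  "vietoris_rips r X = {I. I \<subseteq> X \<and> (\<forall>y\<in>I. \<forall>z\<in>I. dist y z \<le> r)}"

definition star :: "'a set set \<Rightarrow> 'a set \<Rightarrow> 'a set set" where
  "star K \<sigma> = {\<tau>. \<exists>\<upsilon>\<in>K. \<sigma> \<subseteq> \<upsilon> \<and> \<tau> \<subseteq> \<upsilon>}"

definition link :: "'a set set \<Rightarrow> 'a set \<Rightarrow> 'a set set" where
  "link K \<sigma> = {\<tau> \<in> star K \<sigma>. \<tau> \<inter> \<sigma> = {}}"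

text \<open>Simplicial chains with coefficients in the field Z/2: an n-vertex chain is a
  set of simplices with n vertices (addition = symmetric difference).\<close>
definition chains :: "'a set set \<Rightarrow> nat \<Rightarrow> 'a set set set" where
  "chains K n = Pow {\<sigma> \<in> K. card \<sigma> = n}"

text \<open>Boundary operator over Z/2 (the boundary of a vertex is the empty simplex:
  augmentation).\<close>
definition bdry :: "'a set set \<Rightarrow> 'a set set" where
  "bdry c = {\<tau>. odd (card {\<sigma> \<in> c. \<tau> \<subseteq> \<sigma> \<and> card \<sigma> = Suc (card \<tau>)})}"

definition cycles :: "'a set set \<Rightarrow> nat \<Rightarrow> 'a set set set" where
  "cycles K n = {c \<in> chains K n. bdry c = {}}"

definition boundaries :: "'a set set \<Rightarrow> nat \<Rightarrow> 'a set set set" where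
  "boundaries K n = bdry ` chains K (Suc n)"

text \<open>Dimension over Z/2 of a finite Z/2-vector space is log2 of its cardinality.
  Reduced Betti number in degree q (simplices with q+1 vertices):
  dim Z_q - dim B_q.\<close>
definition reduced_betti :: "'a set set \<Rightarrow> nat \<Rightarrow> real" where
  "reduced_betti K q = log 2 (card (cycles K (Suc q))) - log 2 (card (boundaries K (Suc q)))"

definition critical_edge :: "'a::metric_space set \<Rightarrow> 'a set \<Rightarrow> real \<Rightarrow> bool" where
  "critical_edge X e \<rho> \<longleftrightarrow>
     (let L = link (vietoris_rips \<rho> X) e in
       (\<forall>\<tau>\<in>L. \<tau> = {}) \<or> (\<exists>k::nat. k \<ge> 2 \<and> reduced_betti L (k - 2) \<noteq> 0))"

end

theory Submission
  imports Defs
begin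

lemma parity_count:
  fixes f :: "'b \<Rightarrow> nat"
  assumes "finite R"
  shows "even (card {r\<in>R. odd (f r)}) \<longleftrightarrow> even (\<Sum>r\<in>R. f r)"
  using assms
proof (induction R rule: finite_induct)
  case empty
  then show ?case by simp
next
  case (insert a R)
  have fin: "finite {r\<in>R. odd (f r)}" using insert by simp
  show ?case
  proof (cases "odd (f a)")
    case True
    then have "{r\<in>insert a R. odd (f r)} = insert a {r\<in>R. odd (f r)}" by auto
    moreover have "a \<notin> {r\<in>R. odd (f r)}" using insert by auto
    ultimately show ?thesis using insert True fin by simp
  next
    case False
    then have "{r\<in>insert a R. odd (f r)} = {r\<in>R. odd (f r)}" by auto
    then show ?thesis using insert False by simp
  qed
qed

lemma card_between:
  assumes "finite s" "t \<subseteq> s" "card s = Suc (Suc (card t))"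
  shows "card {r. t \<subseteq> r \<and> r \<subseteq> s \<and> card r = Suc (card t)} = 2"
proof -
  have ft: "finite t" using assms finite_subset by blast
  have "card (s - t) = 2" using assms ft by (simp add: card_Diff_subset)
  then obtain a b where ab: "s - t = {a, b}" "a \<noteq> b" by (meson card_2_iff)
  have "{r. t \<subseteq> r \<and> r \<subseteq> s \<and> card r = Suc (card t)} = {insert a t, insert b t}"
  proof (intro equalityI subsetI)
    fix r assume r: "r \<in> {r. t \<subseteq> r \<and> r \<subseteq> s \<and> card r = Suc (card t)}"
    then have fr: "finite r" using assms finite_subset by blast
    have "card (r - t) = 1" using r fr ft by (simp add: card_Diff_subset)
    then obtain c where c: "r - t = {c}" by (meson card_1_singletonE)
    then have "c \<in> {a,b}" using r ab by blast
    moreover have "r = insert c t" using c r by blast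
    ultimately show "r \<in> {insert a t, insert b t}" by blast
  next
    fix r assume "r \<in> {insert a t, insert b t}"
    moreover have "a \<notin> t" "b \<notin> t" "a \<in> s" "b \<in> s" using ab by auto
    ultimately show "r \<in> {r. t \<subseteq> r \<and> r \<subseteq> s \<and> card r = Suc (card t)}"
      using ft assms(2) by auto
  qed
  moreover have "insert a t \<noteq> insert b t" using ab by blast
  ultimately show ?thesis by simp
qed

lemma bdry_bdry:
  assumes "finite c" "\<forall>\<sigma>\<in>c. finite \<sigma>"
  shows "bdry (bdry c) = {}"
proof -
  have "\<tau> \<notin> bdry (bdry c)" for \<tau>
  proof -
    define f where "f \<rho> = card {\<sigma>\<in>c. \<rho>\<subseteq>\<sigma> \<and> card \<sigma> = Suc (card \<rho>)}" for \<rho>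
    define R where "R = {\<rho>. \<tau>\<subseteq>\<rho> \<and> card \<rho> = Suc (card \<tau>) \<and> (\<exists>\<sigma>\<in>c. \<rho>\<subseteq>\<sigma>)}"
    have finR: "finite R"
    proof (rule finite_subset)
      show "R \<subseteq> \<Union> (Pow ` c)" unfolding R_def by auto
      show "finite (\<Union> (Pow ` c))" using assms by auto
    qed
    have eq: "{\<rho>\<in>bdry c. \<tau>\<subseteq>\<rho> \<and> card \<rho> = Suc (card \<tau>)} = {\<rho>\<in>R. odd (f \<rho>)}"
    proof (intro equalityI subsetI)
      fix \<rho> assume a: "\<rho> \<in> {\<rho>\<in>bdry c. \<tau>\<subseteq>\<rho> \<and> card \<rho> = Suc (card \<tau>)}"
      then have o: "odd (f \<rho>)" unfolding bdry_def f_def by auto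
      then have "f \<rho> \<noteq> 0" by presburger
      then have "{\<sigma>\<in>c. \<rho>\<subseteq>\<sigma> \<and> card \<sigma> = Suc (card \<rho>)} \<noteq> {}" unfolding f_def by (metis card.empty)
      then show "\<rho> \<in> {\<rho>\<in>R. odd (f \<rho>)}" using a o unfolding R_def by auto
    next
      fix \<rho> assume "\<rho> \<in> {\<rho>\<in>R. odd (f \<rho>)}"
      then show "\<rho> \<in> {\<rho>\<in>bdry c. \<tau>\<subseteq>\<rho> \<and> card \<rho> = Suc (card \<tau>)}"
        unfolding R_def bdry_def f_def by auto
    qed
    have "(\<Sum>\<rho>\<in>R. f \<rho>) = (\<Sum>\<rho>\<in>R. \<Sum>\<sigma>\<in>{\<sigma>\<in>c. \<rho>\<subseteq>\<sigma> \<and> card \<sigma> = Suc (card \<rho>)}. (1::nat))"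
      unfolding f_def by simp
    also have "\<dots> = (\<Sum>\<sigma>\<in>c. \<Sum>\<rho>\<in>{\<rho>\<in>R. \<rho>\<subseteq>\<sigma> \<and> card \<sigma> = Suc (card \<rho>)}. (1::nat))"
      by (rule sum.swap_restrict[OF finR assms(1)])
    also have "\<dots> = (\<Sum>\<sigma>\<in>c. card {\<rho>\<in>R. \<rho>\<subseteq>\<sigma> \<and> card \<sigma> = Suc (card \<rho>)})" by simp
    finally have sumeq: "(\<Sum>\<rho>\<in>R. f \<rho>) = (\<Sum>\<sigma>\<in>c. card {\<rho>\<in>R. \<rho>\<subseteq>\<sigma> \<and> card \<sigma> = Suc (card \<rho>)})" .
    have "even (card {\<rho>\<in>R. \<rho>\<subseteq>\<sigma> \<and> card \<sigma> = Suc (card \<rho>)})" if s: "\<sigma> \<in> c" for \<sigma>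
    proof (cases "\<tau> \<subseteq> \<sigma> \<and> card \<sigma> = Suc (Suc (card \<tau>))")
      case True
      have "{\<rho>\<in>R. \<rho>\<subseteq>\<sigma> \<and> card \<sigma> = Suc (card \<rho>)} = {r. \<tau> \<subseteq> r \<and> r \<subseteq> \<sigma> \<and> card r = Suc (card \<tau>)}"
        using True s unfolding R_def by auto
      then show ?thesis using card_between[of \<sigma> \<tau>] True s assms by simp
    next
      case False
      then have E: "{\<rho>\<in>R. \<rho>\<subseteq>\<sigma> \<and> card \<sigma> = Suc (card \<rho>)} = {}"
        unfolding R_def by auto
      show ?thesis unfolding E by simp
    qed
    then have "even (\<Sum>\<rho>\<in>R. f \<rho>)" unfolding sumeq by (simp add: dvd_sum)
    then have "even (card {\<rho>\<in>R. odd (f \<rho>)})" using parity_count[OF finR] by blast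
    then have "even (card {\<rho>\<in>bdry c. \<tau>\<subseteq>\<rho> \<and> card \<rho> = Suc (card \<tau>)})" using eq by simp
    then show ?thesis unfolding bdry_def[of "bdry c"] by simp
  qed
  then show ?thesis by blast
qed

lemma cone_bdry:
  assumes "finite z" "\<forall>\<sigma>\<in>z. finite \<sigma>" "bdry z = {}"
  shows "bdry ((insert x) ` {\<sigma>\<in>z. x \<notin> \<sigma>}) = z"
proof -
  let ?h = "(insert x) ` {\<sigma>\<in>z. x \<notin> \<sigma>}"
  have "\<tau> \<in> bdry ?h \<longleftrightarrow> \<tau> \<in> z" for \<tau>
  proof (cases "finite \<tau>")
    case False
    then have E: "{\<sigma>'\<in>?h. \<tau>\<subseteq>\<sigma>' \<and> card \<sigma>' = Suc (card \<tau>)} = {}"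
      using assms(2) finite_subset by fastforce
    have "\<tau> \<notin> z" using False assms(2) by blast
    moreover have "\<tau> \<notin> bdry ?h" unfolding bdry_def mem_Collect_eq E by simp
    ultimately show ?thesis by blast
  next
    case fin: True
    show ?thesis
    proof (cases "x \<in> \<tau>")
      case False
      have "{\<sigma>'\<in>?h. \<tau>\<subseteq>\<sigma>' \<and> card \<sigma>' = Suc (card \<tau>)} = (if \<tau> \<in> z then {insert x \<tau>} else {})"
      proof (intro equalityI subsetI)
        fix s assume "s \<in> {\<sigma>'\<in>?h. \<tau>\<subseteq>\<sigma>' \<and> card \<sigma>' = Suc (card \<tau>)}"
        then obtain \<sigma> where s: "s = insert x \<sigma>" "\<sigma> \<in> z" "x \<notin> \<sigma>" "\<tau> \<subseteq> insert x \<sigma>"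
          "card (insert x \<sigma>) = Suc (card \<tau>)" by auto
        have fs: "finite \<sigma>" using s assms by auto
        have "\<tau> \<subseteq> \<sigma>" using s False by auto
        moreover have "card \<sigma> = card \<tau>" using s fs by simp
        ultimately have "\<tau> = \<sigma>" using fs by (simp add: card_subset_eq)
        then show "s \<in> (if \<tau> \<in> z then {insert x \<tau>} else {})" using s by simp
      next
        fix s assume "s \<in> (if \<tau> \<in> z then {insert x \<tau>} else {})"
        then show "s \<in> {\<sigma>'\<in>?h. \<tau>\<subseteq>\<sigma>' \<and> card \<sigma>' = Suc (card \<tau>)}"
          using False fin by (auto split: if_splits)
      qed
      then show ?thesis unfolding bdry_def by auto
    next
      case True
      define \<tau>0 where "\<tau>0 = \<tau> - {x}"
      have ct: "card \<tau> = Suc (card \<tau>0)" using card.remove[OF fin True] unfolding \<tau>0_def .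
      have t: "\<tau> = insert x \<tau>0" "x \<notin> \<tau>0" using True unfolding \<tau>0_def by auto
      define B where "B = {\<sigma>\<in>z. x\<notin>\<sigma> \<and> \<tau>0\<subseteq>\<sigma> \<and> card \<sigma> = Suc (card \<tau>0)}"
      define D' where "D' = {\<sigma>\<in>z. x\<in>\<sigma> \<and> \<tau>0\<subseteq>\<sigma> \<and> card \<sigma> = Suc (card \<tau>0)}"
      have A: "{\<sigma>'\<in>?h. \<tau>\<subseteq>\<sigma>' \<and> card \<sigma>' = Suc (card \<tau>)} = insert x ` B"
      proof (intro equalityI subsetI)
        fix s assume "s \<in> {\<sigma>'\<in>?h. \<tau>\<subseteq>\<sigma>' \<and> card \<sigma>' = Suc (card \<tau>)}"
        then obtain \<sigma> where s: "s = insert x \<sigma>" "\<sigma> \<in> z" "x \<notin> \<sigma>" "\<tau> \<subseteq> insert x \<sigma>"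
          "card (insert x \<sigma>) = Suc (card \<tau>)" by auto
        have fs: "finite \<sigma>" using s assms by auto
        have "\<sigma> \<in> B" unfolding B_def using s fs ct t by auto
        then show "s \<in> insert x ` B" using s by auto
      next
        fix s assume "s \<in> insert x ` B"
        then obtain \<sigma> where s: "s = insert x \<sigma>" "\<sigma> \<in> B" by auto
        have fs: "finite \<sigma>" using s assms unfolding B_def by auto
        show "s \<in> {\<sigma>'\<in>?h. \<tau>\<subseteq>\<sigma>' \<and> card \<sigma>' = Suc (card \<tau>)}"
          using s fs ct t unfolding B_def by auto
      qed
      have "inj_on (insert x) B" unfolding B_def inj_on_def by (auto simp: insert_ident)
      then have cA: "card {\<sigma>'\<in>?h. \<tau>\<subseteq>\<sigma>' \<and> card \<sigma>' = Suc (card \<tau>)} = card B"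
        unfolding A by (simp add: card_image)
      have D'eq: "D' = (if \<tau> \<in> z then {\<tau>} else {})"
      proof (intro equalityI subsetI)
        fix s assume s: "s \<in> D'"
        then have fs: "finite s" using assms unfolding D'_def by auto
        have "\<tau> \<subseteq> s" using s t unfolding D'_def by auto
        moreover have "card s = card \<tau>" using s ct unfolding D'_def by auto
        ultimately have "\<tau> = s" using fs by (simp add: card_subset_eq)
        then show "s \<in> (if \<tau> \<in> z then {\<tau>} else {})" using s unfolding D'_def by auto
      next
        fix s assume "s \<in> (if \<tau> \<in> z then {\<tau>} else {})"
        then show "s \<in> D'" unfolding D'_def using t ct by (auto split: if_splits)
      qed
      have "\<tau>0 \<notin> bdry z" using assms(3) by simp
      then have ev: "even (card {\<sigma>\<in>z. \<tau>0\<subseteq>\<sigma> \<and> card \<sigma> = Suc (card \<tau>0)})"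
        unfolding bdry_def by simp
      have "{\<sigma>\<in>z. \<tau>0\<subseteq>\<sigma> \<and> card \<sigma> = Suc (card \<tau>0)} = B \<union> D'" unfolding B_def D'_def by auto
      moreover have "B \<inter> D' = {}" unfolding B_def D'_def by auto
      moreover have "finite B" "finite D'" using assms(1) unfolding B_def D'_def by auto
      ultimately have "card {\<sigma>\<in>z. \<tau>0\<subseteq>\<sigma> \<and> card \<sigma> = Suc (card \<tau>0)} = card B + card D'"
        by (simp add: card_Un_disjoint)
      then have "odd (card B) \<longleftrightarrow> \<tau> \<in> z" using ev D'eq by (auto split: if_splits)
      then show ?thesis unfolding bdry_def using cA by simp
    qed
  qed
  then show ?thesis by blast
qed
lemma para: fixes a b :: "'a::real_inner"
  shows "norm (a + b)^2 + norm (a - b)^2 = 2 * norm a ^2 + 2 * norm b ^2"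
  by (simp add: power2_norm_eq_inner inner_add inner_diff inner_commute)
lemma lens: fixes x1 x2 y :: "'a::euclidean_space"
  assumes "dist y x1 \<le> dist x1 x2" "dist y x2 \<le> dist x1 x2"
  shows "dist y (scaleR (1/2) (x1 + x2)) \<le> sqrt 3 / 2 * dist x1 x2"
proof -
  define r where "r = dist x1 x2"
  have r0: "r \<ge> 0" unfolding r_def by simp
  have e: "2 *\<^sub>R (y - scaleR (1/2) (x1 + x2)) = (y - x1) + (y - x2)"
    by (simp add: algebra_simps scaleR_2)
  have e2: "(y - x1) - (y - x2) = x2 - x1" by simp
  have "(2 * dist y (scaleR (1/2) (x1 + x2)))^2 = norm ((y - x1) + (y - x2))^2"
    unfolding dist_norm e[symmetric] by simp
  also have "\<dots> = 2 * norm (y-x1)^2 + 2 * norm (y-x2)^2 - norm (x2 - x1)^2"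
    using para[of "y-x1" "y-x2"] e2 by simp
  also have "\<dots> \<le> 3 * r^2"
  proof -
    have "norm (y-x1) \<le> r" "norm (y-x2) \<le> r" using assms unfolding r_def dist_norm by auto
    then have "norm (y-x1)^2 \<le> r^2" "norm (y-x2)^2 \<le> r^2" by (auto intro: power_mono)
    moreover have "norm (x2 - x1) = r" unfolding r_def dist_norm by (simp add: norm_minus_commute)
    ultimately show ?thesis by simp
  qed
  also have "\<dots> = (sqrt 3 * r)^2" by (simp add: power_mult_distrib)
  finally have "2 * dist y (scaleR (1/2) (x1 + x2)) \<le> sqrt 3 * r"
    by (rule power2_le_imp_le) (simp add: r0)
  then show ?thesis unfolding r_def by simp
qed

lemma cycles_eq_boundaries:
  assumes finL: "finite L" and finE: "\<forall>\<tau>\<in>L. finite \<tau>"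
    and sub: "\<And>\<tau> \<tau>'. \<tau> \<in> L \<Longrightarrow> \<tau>' \<subseteq> \<tau> \<Longrightarrow> \<tau>' \<in> L"
    and cone: "\<And>\<tau>. \<tau> \<in> L \<Longrightarrow> insert x \<tau> \<in> L"
  shows "cycles L n = boundaries L n"
proof (intro equalityI subsetI)
  fix z assume z: "z \<in> cycles L n"
  then have zc: "z \<subseteq> L" "\<forall>\<sigma>\<in>z. card \<sigma> = n" "bdry z = {}"
    unfolding cycles_def chains_def by auto
  have fz: "finite z" using zc finL finite_subset by blast
  have fe: "\<forall>\<sigma>\<in>z. finite \<sigma>" using zc finE by blast
  let ?h = "(insert x) ` {\<sigma>\<in>z. x \<notin> \<sigma>}"
  have h1: "?h \<in> chains L (Suc n)"
    unfolding chains_def using zc fe cone by auto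
  have h2: "z = bdry ?h" using cone_bdry[OF fz fe zc(3)] by simp
  show "z \<in> boundaries L n" unfolding boundaries_def using image_eqI[where f=bdry, OF h2 h1] .
next
  fix b assume "b \<in> boundaries L n"
  then obtain c where c: "c \<in> chains L (Suc n)" "b = bdry c" unfolding boundaries_def by auto
  then have cc: "c \<subseteq> L" "\<forall>\<sigma>\<in>c. card \<sigma> = Suc n" unfolding chains_def by auto
  have fc: "finite c" using cc finL finite_subset by blast
  have fe: "\<forall>\<sigma>\<in>c. finite \<sigma>" using cc finE by blast
  have "b \<in> chains L n"
  proof -
    have "\<tau> \<in> L \<and> card \<tau> = n" if t: "\<tau> \<in> b" for \<tau>
    proof -
      have "odd (card {\<sigma>\<in>c. \<tau> \<subseteq> \<sigma> \<and> card \<sigma> = Suc (card \<tau>)})" using t c unfolding bdry_def by auto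
      then have "{\<sigma>\<in>c. \<tau> \<subseteq> \<sigma> \<and> card \<sigma> = Suc (card \<tau>)} \<noteq> {}" by (intro notI) simp
      then obtain \<sigma> where "\<sigma> \<in> c" "\<tau> \<subseteq> \<sigma>" "card \<sigma> = Suc (card \<tau>)" by blast
      then show ?thesis using cc sub by force
    qed
    then show ?thesis unfolding chains_def by auto
  qed
  moreover have "bdry b = {}" using c bdry_bdry[OF fc fe] by simp
  ultimately show "b \<in> cycles L n" unfolding cycles_def by simp
qed

theorem lemmaC1:
  fixes X :: "'a::euclidean_space set" and x1 x2 :: 'a
  assumes "finite X" and "x1 \<in> X" and "x2 \<in> X" and "x1 \<noteq> x2"
    and "critical_edge X {x1, x2} (dist x1 x2)"
  shows "\<forall>x\<in>X. x \<notin> cball (scaleR (1/2) (x1 + x2)) ((1 - sqrt 3 / 2) * dist x1 x2)"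
proof (rule ccontr)
  assume "\<not> ?thesis"
  then obtain x where xX: "x \<in> X" and xc: "dist (scaleR (1/2) (x1 + x2)) x \<le> (1 - sqrt 3 / 2) * dist x1 x2"
    by auto
  define \<rho> where "\<rho> = dist x1 x2"
  define c where "c = scaleR (1/2) (x1 + x2)"
  have \<rho>0: "\<rho> > 0" unfolding \<rho>_def using assms(4) by simp
  have s3: "sqrt 3 > 1" "sqrt 3 < 2"
    by (simp_all add: real_less_rsqrt real_sqrt_less_iff[of 3 4, simplified])
  have dc1: "dist c x1 = \<rho>/2" "dist c x2 = \<rho>/2"
  proof -
    have h: "(1/2) *\<^sub>R a + (1/2) *\<^sub>R a = a" for a :: 'a by (simp flip: scaleR_add_left)
    have "c - x1 = scaleR (1/2) (x2 - x1)" "c - x2 = scaleR (1/2) (x1 - x2)"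
      unfolding c_def by (simp_all add: algebra_simps h)
    then show "dist c x1 = \<rho>/2" "dist c x2 = \<rho>/2" unfolding \<rho>_def dist_norm
      by (simp_all add: norm_minus_commute)
  qed
  have xc': "dist c x \<le> (1 - sqrt 3 / 2) * \<rho>" using xc unfolding c_def \<rho>_def .
  have k: "(1 - sqrt 3 / 2) * \<rho> < \<rho> / 2" using s3 \<rho>0 by (simp add: field_simps)
  have x12: "x \<noteq> x1" "x \<noteq> x2" using xc' dc1 k by auto
  have dx1: "dist x x1 \<le> \<rho>" "dist x x2 \<le> \<rho>"
    using dist_triangle[of x x1 c] dist_triangle[of x x2 c] dc1 xc' k
    by (simp_all add: dist_commute)
  have G2: "dist y x \<le> \<rho>" if "dist y x1 \<le> \<rho>" "dist y x2 \<le> \<rho>" for y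
  proof -
    have "dist y c \<le> sqrt 3 / 2 * \<rho>" using lens[of y x1 x2] that unfolding c_def \<rho>_def by simp
    then show ?thesis using dist_triangle[of y x c] xc' by (simp add: algebra_simps)
  qed
  define K where "K = vietoris_rips \<rho> X"
  define e where "e = {x1, x2}"
  define L where "L = link K e"
  have Kmem: "\<upsilon> \<in> K \<longleftrightarrow> \<upsilon> \<subseteq> X \<and> (\<forall>y\<in>\<upsilon>. \<forall>z\<in>\<upsilon>. dist y z \<le> \<rho>)" for \<upsilon>
    unfolding K_def vietoris_rips_def by simp
  have Lmem: "\<tau> \<in> L \<longleftrightarrow> \<tau> \<union> e \<in> K \<and> \<tau> \<inter> e = {}" for \<tau>
  proof
    assume "\<tau> \<in> L"
    then obtain \<upsilon> where "\<upsilon> \<in> K" "e \<subseteq> \<upsilon>" "\<tau> \<subseteq> \<upsilon>" "\<tau> \<inter> e = {}"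
      unfolding L_def link_def star_def by auto
    then show "\<tau> \<union> e \<in> K \<and> \<tau> \<inter> e = {}" unfolding Kmem by blast
  next
    assume "\<tau> \<union> e \<in> K \<and> \<tau> \<inter> e = {}"
    then show "\<tau> \<in> L" unfolding L_def link_def star_def by blast
  qed
  have LX: "\<tau> \<subseteq> X" if "\<tau> \<in> L" for \<tau>
  proof -
    have "\<tau> \<union> e \<in> K" using that Lmem by simp
    then have "\<tau> \<union> e \<subseteq> X" using Kmem by simp
    then show ?thesis by simp
  qed
  have finL: "finite L"
  proof (rule finite_subset)
    show "L \<subseteq> Pow X" using LX by auto
    show "finite (Pow X)" using assms(1) by simp
  qed
  have finE: "\<forall>\<tau>\<in>L. finite \<tau>" using LX assms(1) by (meson finite_subset)
  have sub: "\<tau>' \<in> L" if "\<tau> \<in> L" "\<tau>' \<subseteq> \<tau>" for \<tau> \<tau>'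
  proof -
    have a: "\<tau> \<union> e \<in> K" "\<tau> \<inter> e = {}" using that(1) Lmem by auto
    have "\<tau>' \<union> e \<subseteq> \<tau> \<union> e" using that(2) by auto
    then have "\<tau>' \<union> e \<in> K" using a(1) unfolding Kmem by blast
    moreover have "\<tau>' \<inter> e = {}" using a(2) that(2) by auto
    ultimately show ?thesis using Lmem by simp
  qed
  have cone: "insert x \<tau> \<in> L" if t: "\<tau> \<in> L" for \<tau>
  proof -
    have A: "\<tau> \<union> e \<subseteq> X" "\<forall>y\<in>\<tau> \<union> e. \<forall>z\<in>\<tau> \<union> e. dist y z \<le> \<rho>" "\<tau> \<inter> e = {}"
      using t unfolding Lmem Kmem by auto
    have B: "dist y x \<le> \<rho>" if "y \<in> \<tau> \<union> e" for y
      using G2 A(2) that unfolding e_def by auto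
    have "insert x \<tau> \<union> e \<subseteq> X" using A xX by auto
    moreover have "\<forall>y\<in>insert x \<tau> \<union> e. \<forall>z\<in>insert x \<tau> \<union> e. dist y z \<le> \<rho>"
      using A(2) B \<rho>0 by (auto simp: dist_commute)
    moreover have "insert x \<tau> \<inter> e = {}" using A(3) x12 unfolding e_def by auto
    ultimately show ?thesis unfolding Lmem Kmem by blast
  qed
  have "{} \<in> L" unfolding Lmem Kmem e_def \<rho>_def using assms(2,3) by (auto simp: dist_commute)
  then have xL: "{x} \<in> L" using cone[of "{}"] by simp
  have "reduced_betti L q = 0" for q
    unfolding reduced_betti_def using cycles_eq_boundaries[OF finL finE sub cone] by simp
  moreover have "\<not> (\<forall>\<tau>\<in>L. \<tau> = {})" using xL by blast
  ultimately have "\<not> critical_edge X {x1, x2} (dist x1 x2)"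
    unfolding critical_edge_def Let_def L_def K_def e_def \<rho>_def by auto
  then show False using assms(5) by simp
qed

end
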